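(* Let $\mathcal{A}=\mathbb{C}[x,y]$ and consider the complex $0\to\mathcal{A}\xrightarrow{d^0}\mathcal{A}\times\mathcal{A}\xrightarrow{d^1}\mathcal{A}\to0$ with $d^0(f)=(x\partial_yf,\,-x^2\partial_xf)$ and $d^1(f_1,f_2)=x\partial_yf_2+x^2\partial_xf_1-xf_1$ (the logarithmic Poisson complex of the bracket $\{x,y\}=x^2$ along $x^2\mathcal{A}$). Its cohomology satisfies $H^0_{PS}\cong\mathbb{C}$, $H^1_{PS}\cong\mathbb{C}[y]\oplus\mathbb{C}_1[x]$, $H^2_{PS}\cong\mathbb{C}[y]$, where $\mathbb{C}_1[x]=\{a_0+a_1x:\ a_0,a_1\in\mathbb{C}\}$. *)

theory Defs
  imports "HOL-Computational_Algebra.Polynomial" "HOL-Library.Product_Plus"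
begin

text \<open>C[x,y] is represented as complex poly poly: polynomials in y whose
coefficients are polynomials in x.\<close>
type_synonym cxy = "complex poly poly"

definition Xv :: cxy where "Xv = [:[:0, 1:]:]"

definition dX :: "cxy \<Rightarrow> cxy" where "dX f = map_poly pderiv f"
definition dY :: "cxy \<Rightarrow> cxy" where "dY f = pderiv f"

definition d0 :: "cxy \<Rightarrow> cxy \<times> cxy" where
  "d0 f = (Xv * dY f, - (Xv ^ 2 * dX f))"

definition d1 :: "cxy \<times> cxy \<Rightarrow> cxy" where
  "d1 p = Xv * dY (snd p) + Xv ^ 2 * dX (fst p) - Xv * fst p"

definition scA :: "complex \<Rightarrow> cxy \<Rightarrow> cxy" where "scA c f = smult [:c:] f"
definition scA2 :: "complex \<Rightarrow> cxy \<times> cxy \<Rightarrow> cxy \<times> cxy" where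
  "scA2 c p = (scA c (fst p), scA c (snd p))"
definition scP2 :: "complex \<Rightarrow> complex poly \<times> complex poly \<Rightarrow> complex poly \<times> complex poly" where
  "scP2 c p = (smult c (fst p), smult c (snd p))"

text \<open>Cohomology Z/B is C-linearly isomorphic to W: there is a C-linear map on the
cocycles Z onto W whose kernel is exactly the coboundaries B (first isomorphism theorem).\<close>
definition cohom_iso ::
  "(complex \<Rightarrow> 'a::{plus,zero} \<Rightarrow> 'a) \<Rightarrow> (complex \<Rightarrow> 'b::{plus,zero} \<Rightarrow> 'b)
    \<Rightarrow> 'a set \<Rightarrow> 'a set \<Rightarrow> 'b set \<Rightarrow> bool" where
  "cohom_iso sa sb Z B W \<longleftrightarrow> (\<exists>\<phi>.
      (\<forall>u\<in>Z. \<forall>v\<in>Z. \<phi> (u + v) = \<phi> u + \<phi> v) \<and>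
      (\<forall>c. \<forall>u\<in>Z. \<phi> (sa c u) = sb c (\<phi> u)) \<and>
      \<phi> ` Z = W \<and> {z\<in>Z. \<phi> z = 0} = B)"

end

theory Submission
  imports Defs
begin

abbreviation X :: "complex poly" where "X \<equiv> [:0,1:]"

lemma Xv_mult: "Xv * f = smult X f" by (simp add: Xv_def)
lemma Xv2_mult: "Xv ^ 2 * f = smult (X^2) f"
  by (simp add: Xv_def power2_eq_square)

lemma dY_add: "dY (f + g) = dY f + dY g" by (simp add: dY_def pderiv_add)
lemma dY_minus: "dY (- f) = - dY f" by (simp add: dY_def pderiv_minus)
lemma dY_diff: "dY (f - g) = dY f - dY g" by (simp add: dY_def pderiv_diff)
lemma dY_smult: "dY (smult a f) = smult a (dY f)" by (simp add: dY_def pderiv_smult)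
lemma dY_const: "dY [:a:] = 0" by (simp add: dY_def pderiv_pCons)
lemma dY_0: "dY 0 = 0" by (simp add: dY_def)

lemma dX_add: "dX (f + g) = dX f + dX g"
  by (simp add: dX_def poly_eq_iff coeff_map_poly pderiv_add)
lemma dX_minus: "dX (- f) = - dX f"
  by (simp add: dX_def poly_eq_iff coeff_map_poly pderiv_minus)
lemma dX_diff: "dX (f - g) = dX f - dX g"
  by (simp add: dX_def poly_eq_iff coeff_map_poly pderiv_diff)
lemma dX_smult: "dX (smult a f) = smult (pderiv a) f + smult a (dX f)"
  by (simp add: dX_def poly_eq_iff coeff_map_poly pderiv_mult algebra_simps)
lemma dX_const: "dX [:a:] = [:pderiv a:]"
  by (simp add: dX_def poly_eq_iff coeff_map_poly coeff_pCons split: nat.splits)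
lemma dX_0: "dX 0 = 0" by (simp add: dX_def)
lemma dX_dY: "dX (dY h) = dY (dX h)"
  by (simp add: dX_def dY_def poly_eq_iff coeff_map_poly coeff_pderiv pderiv_mult of_nat_poly)

lemma d1_eq: "d1 (f,q) = smult X (dY q + smult X (dX f) - f)"
  by (simp add: d1_def Xv_mult Xv2_mult smult_add_right smult_diff_right power2_eq_square)

lemma d0_eq: "d0 h = (smult X (dY h), - smult (X^2) (dX h))"
  by (simp add: d0_def Xv_mult Xv2_mult)

definition integY :: "cxy \<Rightarrow> cxy" where
  "integY p = Poly (0 # map (\<lambda>k. smult (inverse (of_nat (Suc k))) (coeff p k)) [0..<Suc (degree p)])"

lemma coeff_integY_0: "coeff (integY p) 0 = 0"
  by (simp add: integY_def)
lemma coeff_integY_Suc: "coeff (integY p) (Suc k) = smult (inverse (of_nat (Suc k))) (coeff p k)"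
  by (cases "k \<le> degree p") (auto simp: integY_def nth_default_def coeff_eq_0 simp del: upt_Suc)

lemma dY_integY: "dY (integY p) = p"
  by (simp add: dY_def poly_eq_iff coeff_pderiv coeff_integY_Suc of_nat_poly del: of_nat_Suc)

definition integ1 :: "complex poly \<Rightarrow> complex poly" where
  "integ1 p = Poly (0 # map (\<lambda>k. coeff p k / of_nat (Suc k)) [0..<Suc (degree p)])"

lemma coeff_integ1_Suc: "coeff (integ1 p) (Suc k) = coeff p k / of_nat (Suc k)"
  by (cases "k \<le> degree p") (auto simp: integ1_def nth_default_def coeff_eq_0 simp del: upt_Suc)

lemma pderiv_integ1: "pderiv (integ1 p) = p"
  by (simp add: poly_eq_iff coeff_pderiv coeff_integ1_Suc del: of_nat_Suc)

lemma deg1: assumes "degree (q::complex poly) \<le> 1" shows "q = [:coeff q 0, coeff q 1:]"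
proof (rule poly_eqI)
  fix n show "coeff q n = coeff [:coeff q 0, coeff q 1:] n"
  proof (cases n)
    case (Suc m) then show ?thesis
    proof (cases m)
      case (Suc k)
      have "coeff q n = 0" using assms Suc \<open>n = Suc m\<close> by (intro coeff_eq_0) simp
      then show ?thesis using Suc \<open>n = Suc m\<close> by simp
    qed simp
  qed simp
qed

lemma div_X: "coeff (c::complex poly) 0 = 0 \<Longrightarrow> \<exists>d. c = X * d"
proof -
  assume a: "coeff c 0 = 0"
  obtain b d where "c = pCons b d" by (rule pCons_cases)
  with a show ?thesis by (intro exI[of _ d]) simp
qed

lemma div_X2: "coeff (c::complex poly) 0 = 0 \<Longrightarrow> coeff c 1 = 0 \<Longrightarrow> \<exists>s. c = X^2 * s"
proof -
  assume a: "coeff c 0 = 0" "coeff c 1 = 0"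
  obtain d where d: "c = X * d" using div_X[OF a(1)] by blast
  have "coeff d 0 = 0" using a(2) d by simp
  then obtain e where "d = X * e" using div_X by blast
  with d show ?thesis by (intro exI[of _ e]) (simp add: power2_eq_square)
qed

lemma shiftX: assumes "\<forall>j. coeff (coeff (f::cxy) j) 0 = 0" shows "\<exists>g. f = smult X g"
proof -
  have c: "X * (c div X) = c" if c0: "coeff c 0 = 0" for c
  proof -
    obtain d where "c = X * d" using div_X[OF c0] by blast
    then show ?thesis using nonzero_mult_div_cancel_left[of X d] by simp
  qed
  have "f = smult X (map_poly (\<lambda>c. c div X) f)"
  proof (rule poly_eqI)
    fix n
    have "coeff (smult X (map_poly (\<lambda>c. c div X) f)) n = X * (coeff f n div X)"
      by (simp only: coeff_smult coeff_map_poly div_0)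
    also have "\<dots> = coeff f n" using c assms by blast
    finally show "coeff f n = coeff (smult X (map_poly (\<lambda>c. c div X) f)) n" by simp
  qed
  then show ?thesis by blast
qed

lemma dX_liftc: "dX (map_poly (\<lambda>c. [:c:]) p) = 0"
  by (simp add: dX_def poly_eq_iff coeff_map_poly pderiv_pCons)

lemma pderivX: "pderiv X = 1" by (simp add: pderiv_pCons)

lemma d1_d0: "d1 (d0 h) = 0"
proof -
  have a: "dY (- smult (X^2) (dX h)) = - smult (X^2) (dY (dX h))" by (simp only: dY_minus dY_smult)
  have b: "dX (smult X (dY h)) = dY h + smult X (dY (dX h))" by (simp add: dX_smult pderivX dX_dY)
  have g: "- smult (c^2) v + smult c (u + smult c v) - smult c u = 0" for c :: "complex poly" and u v :: cxy
    by (simp add: smult_add_right power2_eq_square)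
  show ?thesis apply (unfold d0_eq d1_eq fst_conv snd_conv a b) 
    apply (rule trans[OF _ smult_0_right[of X]])
    apply (rule arg_cong[where f="smult X"])
    by (rule g)
qed

theorem proposition3p2:
  shows "cohom_iso scA (*) {f. d0 f = 0} {0} (UNIV :: complex set) \<and>
         cohom_iso scA2 scP2 {p. d1 p = 0} (range d0)
           {(p, q). degree (q :: complex poly) \<le> 1} \<and>
         cohom_iso scA smult UNIV (range d1) (UNIV :: complex poly set)"
proof (intro conjI)
  have Z0: "{f. d0 f = 0} = range (\<lambda>c. [:[:c:]:])"
  proof (intro set_eqI iffI)
    fix f :: cxy assume "f \<in> {f. d0 f = 0}"
    then have "dY f = 0" "dX f = 0" by (auto simp: d0_eq zero_prod_def)
    then have "degree f = 0" by (simp add: dY_def pderiv_eq_0_iff)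
    then have f1: "f = [:coeff f 0:]" by (metis degree_0_id)
    with \<open>dX f = 0\<close> have "pderiv (coeff f 0) = 0" by (metis dX_const pCons_eq_0_iff)
    then have "degree (coeff f 0) = 0" by (simp add: pderiv_eq_0_iff)
    then have "coeff f 0 = [:coeff (coeff f 0) 0:]" by (metis degree_0_id)
    with f1 show "f \<in> range (\<lambda>c. [:[:c:]:])" by (metis rangeI)
  next
    fix f :: cxy assume "f \<in> range (\<lambda>c. [:[:c:]:])"
    then show "f \<in> {f. d0 f = 0}" by (auto simp: d0_eq dY_const dX_const pderiv_pCons zero_prod_def)
  qed
  show "cohom_iso scA (*) {f. d0 f = 0} {0} (UNIV :: complex set)"
    unfolding cohom_iso_def Z0
    apply (rule exI[of _ "\<lambda>f. coeff (coeff f 0) 0"])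
    apply (auto simp: scA_def)
    subgoal for x by (rule image_eqI[where x="[:[:x:]:]"]) auto
    done
next
  show "cohom_iso scA smult UNIV (range d1) (UNIV :: complex poly set)"
    unfolding cohom_iso_def
  proof (rule exI[of _ "map_poly (\<lambda>c. coeff c 0)"], intro conjI ballI allI)
    show "map_poly (\<lambda>c. coeff c 0) (u + v) = map_poly (\<lambda>c. coeff c 0) u + map_poly (\<lambda>c. coeff c 0) v" for u v
      by (simp add: poly_eq_iff coeff_map_poly)
    show "map_poly (\<lambda>c. coeff c 0) (scA c u) = smult c (map_poly (\<lambda>c. coeff c 0) u)" for c u
      by (simp add: poly_eq_iff coeff_map_poly scA_def)
    show "map_poly (\<lambda>c. coeff c 0) ` (UNIV::cxy set) = (UNIV :: complex poly set)"
    proof -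
      have "p \<in> range (map_poly (\<lambda>c::complex poly. coeff c 0))" for p :: "complex poly"
      proof -
        have "map_poly (\<lambda>c. coeff c 0) (map_poly (\<lambda>c. [:c:]) p) = p"
          by (simp add: poly_eq_iff coeff_map_poly)
        then show ?thesis by (metis rangeI)
      qed
      then show ?thesis by blast
    qed
    show "{z \<in> UNIV. map_poly (\<lambda>c. coeff c 0) z = 0} = range d1"
    proof (intro set_eqI iffI)
      fix z :: cxy assume "z \<in> {z \<in> UNIV. map_poly (\<lambda>c. coeff c 0) z = 0}"
      then have "\<forall>j. coeff (coeff z j) 0 = 0" by (auto simp: poly_eq_iff coeff_map_poly)
      then obtain g where g: "z = smult X g" using shiftX by blast
      have "d1 (0, integY g) = z" by (simp add: d1_eq dY_integY dX_0 g)
      then show "z \<in> range d1" by (metis rangeI)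
    next
      fix z :: cxy assume "z \<in> range d1"
      then obtain f q where "z = d1 (f,q)" by auto
      then show "z \<in> {z \<in> UNIV. map_poly (\<lambda>c. coeff c 0) z = 0}"
        by (simp add: d1_eq poly_eq_iff coeff_map_poly)
    qed
  qed
next
  define \<phi> where "\<phi> = (\<lambda>p::cxy\<times>cxy. (map_poly (\<lambda>c. coeff c 0) (fst p),
                          [:coeff (coeff (snd p) 0) 0, coeff (coeff (snd p) 0) 1:]))"
  show "cohom_iso scA2 scP2 {p. d1 p = 0} (range d0) {(p, q). degree (q :: complex poly) \<le> 1}"
    unfolding cohom_iso_def
  proof (rule exI[of _ \<phi>], intro conjI ballI allI)
    show "\<phi> (u + v) = \<phi> u + \<phi> v" for u v
      by (simp add: \<phi>_def poly_eq_iff coeff_map_poly)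
    show "\<phi> (scA2 c u) = scP2 c (\<phi> u)" for c u
      by (simp add: \<phi>_def poly_eq_iff coeff_map_poly scA_def scA2_def scP2_def)
    show "\<phi> ` {p. d1 p = 0} = {(p, q). degree (q :: complex poly) \<le> 1}"
    proof (intro set_eqI iffI)
      fix w :: "complex poly \<times> complex poly" assume "w \<in> \<phi> ` {p. d1 p = 0}"
      then show "w \<in> {(p, q). degree (q :: complex poly) \<le> 1}"
        by (auto simp: \<phi>_def)
    next
      fix w :: "complex poly \<times> complex poly" assume "w \<in> {(p, q). degree (q :: complex poly) \<le> 1}"
      then obtain p r where w: "w = (p, r)" and r: "degree r \<le> 1" by auto
      define F where "F = map_poly (\<lambda>c. [:c:]) p"
      define Q where "Q = [:r:] + integY F"
      have dYQ: "dY Q = F" by (simp only: Q_def dY_add dY_const dY_integY add_0_left)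
      have dXF: "dX F = 0" unfolding F_def by (rule dX_liftc)
      have dFQ: "d1 (F, Q) = 0" by (simp only: d1_eq dYQ dXF smult_0_right add_0_right diff_self)
      have p1: "map_poly (\<lambda>c. coeff c 0) F = p" unfolding F_def by (simp add: poly_eq_iff coeff_map_poly)
      have p2: "coeff Q 0 = r" by (simp add: Q_def coeff_integY_0)
      have "\<phi> (F, Q) = w"
        by (simp only: \<phi>_def fst_conv snd_conv p1 p2 deg1[OF r, symmetric] w)
      then show "w \<in> \<phi> ` {p. d1 p = 0}" using dFQ by (metis (mono_tags) image_eqI mem_Collect_eq)
    qed
    show "{z \<in> {p. d1 p = 0}. \<phi> z = 0} = range d0"
    proof (intro set_eqI iffI)
      fix z :: "cxy \<times> cxy" assume "z \<in> range d0"
      then obtain h where h: "z = d0 h" by auto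
      have "d1 z = 0" by (simp add: h d1_d0)
      moreover have "\<phi> z = 0"
        by (simp add: h d0_eq \<phi>_def zero_prod_def poly_eq_iff coeff_map_poly power2_eq_square)
      ultimately show "z \<in> {z \<in> {p. d1 p = 0}. \<phi> z = 0}" by simp
    next
      fix z :: "cxy \<times> cxy" assume "z \<in> {z \<in> {p. d1 p = 0}. \<phi> z = 0}"
      then obtain f q where z: "z = (f,q)" and Z: "dY q + smult X (dX f) - f = 0"
        and ph: "\<phi> (f,q) = 0" by (cases z) (auto simp: d1_eq)
      from ph have ph1: "map_poly (\<lambda>c. coeff c 0) f = 0"
        and ph2: "[:coeff (coeff q 0) 0, coeff (coeff q 0) 1:] = 0"
        by (simp_all add: \<phi>_def zero_prod_def)
      have "coeff (coeff f j) 0 = 0" for j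
        using arg_cong[OF ph1, of "\<lambda>p. coeff p j"] by (simp add: coeff_map_poly)
      then have "\<forall>j. coeff (coeff f j) 0 = 0" by blast
      then obtain g where g: "f = smult X g" using shiftX by blast
      from ph2 have q0: "coeff (coeff q 0) 0 = 0" "coeff (coeff q 0) 1 = 0"
        by simp_all
      define H where "H = integY g"
      define r where "r = q + smult (X^2) (dX H)"
      have dYq: "dY q = f - smult X (dX f)" using Z by (simp add: algebra_simps)
      have "dY r = 0"
        by (simp add: r_def dY_add dY_smult dYq H_def dX_dY[symmetric] dY_integY g dX_smult
            pderivX smult_add_right smult_diff_right power2_eq_square)
      then have "degree r = 0" by (simp add: dY_def pderiv_eq_0_iff)
      then have r1: "r = [:coeff r 0:]" by (metis degree_0_id)
      have cr: "coeff r 0 = coeff q 0"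
        by (simp add: r_def H_def dX_def coeff_map_poly coeff_integY_0)
      obtain s where s: "coeff q 0 = X^2 * s" using div_X2 q0 by blast
      define h where "h = H + [:- integ1 s:]"
      have "d0 h = (f, q)"
      proof -
        have "q = r - smult (X^2) (dX H)" by (simp add: r_def)
        also have "\<dots> = [:X^2 * s:] - smult (X^2) (dX H)" using r1 cr s by simp
        finally have qq: "q = [:X^2 * s:] - smult (X^2) (dX H)" .
        show ?thesis
          by (simp add: d0_eq h_def dY_add dY_const H_def dY_integY g dX_add dX_const
              pderiv_minus pderiv_integ1 qq smult_add_right)
      qed
      then show "z \<in> range d0" by (metis z rangeI)
    qed
  qed
qed

end
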